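(* Let $Q=[u_1,\dots,u_{2n}]\subset\mathbb{S}^2$ with $2n\ge 6$ be a spherical polygon which is symmetric, i.e. $u_{i+n}=-u_i$ for all $i$. Let $D^+$ be the number of self-intersections of $Q$ and $I$ the number of inflections of $Q$. Then $2D^++I\ge 6$.
   Context: A spherical polygon $Q=[u_1,\dots,u_m]$ is a cyclic sequence of points of $\mathbb{S}^2$ (indices mod $m$) whose edges are the minimal great-circle arcs from $u_i$ to $u_{i+1}$. Standing assumption: no three vertices of $Q$ lie on a common great circle. A self-intersection is a pair of non-adjacent edges that intersect. With $[a,b,c]$ the determinant of $a,b,c\in\mathbb{R}^3$, the pair $\{u_i,u_{i+1}\}$ is an inflection if $[u_{i-1},u_i,u_{i+1}]$ and $[u_i,u_{i+1},u_{i+2}]$ have opposite signs. *)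

theory Defs
  imports "HOL-Analysis.Analysis"
begin

definition det3 :: "real^3 \<Rightarrow> real^3 \<Rightarrow> real^3 \<Rightarrow> real" where
  "det3 a b c = a \<bullet> (cross3 b c)"

text \<open>Minimal great-circle arc from a to b (for non-antipodal unit vectors a, b):
  the radial projection onto the sphere of the chord from a to b.\<close>
definition sph_arc :: "real^3 \<Rightarrow> real^3 \<Rightarrow> (real^3) set" where
  "sph_arc a b = {sgn ((1 - t) *\<^sub>R a + t *\<^sub>R b) | t. 0 \<le> t \<and> t \<le> 1}"

definition pedge :: "nat \<Rightarrow> (nat \<Rightarrow> real^3) \<Rightarrow> nat \<Rightarrow> (real^3) set" where
  "pedge m u i = sph_arc (u (i mod m)) (u (Suc i mod m))"

text \<open>Edges i, j (with i < j < m) are adjacent iff j = i+1 or (i = 0 and j = m-1).\<close>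
definition self_intersections :: "nat \<Rightarrow> (nat \<Rightarrow> real^3) \<Rightarrow> (nat \<times> nat) set" where
  "self_intersections m u =
     {(i, j). i < j \<and> j < m \<and> j \<noteq> Suc i \<and> \<not> (i = 0 \<and> j = m - 1)
              \<and> pedge m u i \<inter> pedge m u j \<noteq> {}}"

text \<open>Index i < m marks an inflection {u_i, u_(i+1)}:
  [u_(i-1), u_i, u_(i+1)] and [u_i, u_(i+1), u_(i+2)] have opposite signs.\<close>
definition inflections :: "nat \<Rightarrow> (nat \<Rightarrow> real^3) \<Rightarrow> nat set" where
  "inflections m u =
     {i. i < m \<and>
         det3 (u ((i + m - 1) mod m)) (u (i mod m)) (u (Suc i mod m)) *
         det3 (u (i mod m)) (u (Suc i mod m)) (u ((i + 2) mod m)) < 0}"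

end

theory Submission
  imports Defs
begin

lemma det3_expand: "det3 a b c =
  a$1*(b$2*c$3 - b$3*c$2) + a$2*(b$3*c$1 - b$1*c$3) + a$3*(b$1*c$2 - b$2*c$1)"
  unfolding det3_def cross3_def by (simp add: inner_vec_def sum_3 algebra_simps)

lemma det3_cyc: "det3 b c a = det3 a b c" by (simp add: det3_expand algebra_simps)
lemma det3_swap12: "det3 b a c = - det3 a b c" by (simp add: det3_expand algebra_simps)
lemma det3_swap23: "det3 a c b = - det3 a b c" by (simp add: det3_expand algebra_simps)
lemma det3_add1: "det3 (x + y) b c = det3 x b c + det3 y b c" by (simp add: det3_expand algebra_simps)
lemma det3_add2: "det3 a (x + y) c = det3 a x c + det3 a y c" by (simp add: det3_expand algebra_simps)
lemma det3_add3: "det3 a b (x + y) = det3 a b x + det3 a b y" by (simp add: det3_expand algebra_simps)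
lemma det3_scale1: "det3 (r *\<^sub>R x) b c = r * det3 x b c" by (simp add: det3_expand algebra_simps)
lemma det3_scale2: "det3 a (r *\<^sub>R x) c = r * det3 a x c" by (simp add: det3_expand algebra_simps)
lemma det3_scale3: "det3 a b (r *\<^sub>R x) = r * det3 a b x" by (simp add: det3_expand algebra_simps)
lemma det3_neg1: "det3 (- x) b c = - det3 x b c" by (simp add: det3_expand algebra_simps)
lemma det3_neg2: "det3 a (- x) c = - det3 a x c" by (simp add: det3_expand algebra_simps)
lemma det3_neg3: "det3 a b (- x) = - det3 a b x" by (simp add: det3_expand algebra_simps)
lemma det3_rep12: "det3 a a c = 0" by (simp add: det3_expand algebra_simps)
lemma det3_rep23: "det3 a b b = 0" by (simp add: det3_expand algebra_simps)
lemma det3_rep13: "det3 a b a = 0" by (simp add: det3_expand algebra_simps)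

lemma det3_diff1: "det3 (x - y) b c = det3 x b c - det3 y b c" by (simp add: det3_expand algebra_simps)
lemma det3_diff2: "det3 a (x - y) c = det3 a x c - det3 a y c" by (simp add: det3_expand algebra_simps)
lemma det3_diff3: "det3 a b (x - y) = det3 a b x - det3 a b y" by (simp add: det3_expand algebra_simps)

lemma master: "det3 b c d *\<^sub>R a - det3 a c d *\<^sub>R b + det3 a b d *\<^sub>R c - det3 a b c *\<^sub>R d = 0"
  by (simp add: vec_eq_iff forall_3 det3_expand algebra_simps)

lemmas det3_lin = det3_add1 det3_add2 det3_add3 det3_scale1 det3_scale2 det3_scale3
  det3_neg1 det3_neg2 det3_neg3 det3_diff1 det3_diff2 det3_diff3 det3_rep12 det3_rep23 det3_rep13

definition cone2 :: "real^3 \<Rightarrow> real^3 \<Rightarrow> (real^3) set" where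
  "cone2 a b = {x. \<exists>\<alpha> \<beta>. \<alpha> \<ge> 0 \<and> \<beta> \<ge> 0 \<and> x = \<alpha> *\<^sub>R a + \<beta> *\<^sub>R b}"

definition meet :: "real^3 \<Rightarrow> real^3 \<Rightarrow> real^3 \<Rightarrow> real^3 \<Rightarrow> bool" where
  "meet a b c d \<longleftrightarrow> (\<exists>Z. Z \<noteq> 0 \<and> Z \<in> cone2 a b \<and> Z \<in> cone2 c d)"

definition chainX :: "(nat \<Rightarrow> real^3) \<Rightarrow> nat \<Rightarrow> bool" where
  "chainX p k \<longleftrightarrow> (\<exists>i j. i + 2 \<le> j \<and> j < k \<and> meet (p i) (p (Suc i)) (p j) (p (Suc j)))"

definition gpos :: "(nat \<Rightarrow> real^3) \<Rightarrow> nat \<Rightarrow> bool" where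
  "gpos p k \<longleftrightarrow> (\<forall>x y z. x < k \<longrightarrow> y < k \<longrightarrow> z < k \<longrightarrow> x \<noteq> y \<longrightarrow> y \<noteq> z \<longrightarrow> x \<noteq> z
      \<longrightarrow> det3 (p x) (p y) (p z) \<noteq> 0)"

definition lturn :: "(nat \<Rightarrow> real^3) \<Rightarrow> nat \<Rightarrow> bool" where
  "lturn p k \<longleftrightarrow> (\<forall>i. 0 < i \<longrightarrow> i < k \<longrightarrow> det3 (p (i - 1)) (p i) (p (Suc i)) > 0)"

lemma seg_aux:
  fixes a b t :: real
  assumes "b < 0" "a > 0" "0 \<le> t" "t \<le> a / (a - b)"
  shows "(1 - t) * a + t * b \<ge> 0"
proof -
  have "a - b > 0" using assms by simp
  then have "t * (a - b) \<le> a" using assms(4) by (simp add: pos_le_divide_eq)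
  then show ?thesis by (simp add: algebra_simps)
qed

lemma seg_aux0:
  fixes a b :: real
  assumes "b < 0" "a > 0"
  shows "(1 - a / (a - b)) * a + (a / (a - b)) * b = 0" "0 < a / (a - b)" "a / (a - b) < 1"
proof -
  have d: "a - b > 0" using assms by simp
  show "(1 - a / (a - b)) * a + (a / (a - b)) * b = 0" using d by (simp add: field_simps)
  show "0 < a / (a - b)" using d assms by simp
  show "a / (a - b) < 1" using d assms by (simp add: divide_less_eq)
qed

lemma seg3:
  fixes a1 a2 a3 b1 b2 b3 :: real
  assumes "a1 \<ge> 0" "a2 \<ge> 0" "a3 \<ge> 0" "b1 < 0 \<or> b2 < 0 \<or> b3 < 0"
    "b1 < 0 \<Longrightarrow> a1 > 0" "b2 < 0 \<Longrightarrow> a2 > 0" "b3 < 0 \<Longrightarrow> a3 > 0"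
  shows "\<exists>t. 0 < t \<and> t < 1 \<and> (1-t)*a1 + t*b1 \<ge> 0 \<and> (1-t)*a2 + t*b2 \<ge> 0 \<and> (1-t)*a3 + t*b3 \<ge> 0
     \<and> ((b1 < 0 \<and> (1-t)*a1 + t*b1 = 0) \<or> (b2 < 0 \<and> (1-t)*a2 + t*b2 = 0) \<or> (b3 < 0 \<and> (1-t)*a3 + t*b3 = 0))"
proof -
  define c1 where "c1 = (if b1 < 0 then a1 / (a1 - b1) else 2)"
  define c2 where "c2 = (if b2 < 0 then a2 / (a2 - b2) else 2)"
  define c3 where "c3 = (if b3 < 0 then a3 / (a3 - b3) else 2)"
  define t where "t = min c1 (min c2 c3)"
  have c1p: "0 < c1" using seg_aux0[of b1 a1] assms unfolding c1_def by auto
  have c2p: "0 < c2" using seg_aux0[of b2 a2] assms unfolding c2_def by auto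
  have c3p: "0 < c3" using seg_aux0[of b3 a3] assms unfolding c3_def by auto
  have c1l: "b1 < 0 \<Longrightarrow> c1 < 1" using seg_aux0[of b1 a1] assms unfolding c1_def by auto
  have c2l: "b2 < 0 \<Longrightarrow> c2 < 1" using seg_aux0[of b2 a2] assms unfolding c2_def by auto
  have c3l: "b3 < 0 \<Longrightarrow> c3 < 1" using seg_aux0[of b3 a3] assms unfolding c3_def by auto
  have tp: "0 < t" using c1p c2p c3p unfolding t_def by simp
  have tl: "t < 1" using c1l c2l c3l assms(4) unfolding t_def by linarith
  have g: "\<And>a b c. a \<ge> 0 \<Longrightarrow> (b < 0 \<Longrightarrow> a > 0) \<Longrightarrow> c = (if b < 0 then a / (a - b) else 2)
     \<Longrightarrow> t \<le> c \<Longrightarrow> (1-t)*a + t*b \<ge> 0"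
  proof -
    fix a b c assume h: "a \<ge> 0" "b < 0 \<Longrightarrow> a > 0" "c = (if b < 0 then a / (a - b) else 2)" "t \<le> c"
    show "(1-t)*a + t*b \<ge> 0"
    proof (cases "b < 0")
      case True then show ?thesis using seg_aux[of b a t] h tp by simp
    next
      case False then show ?thesis using h tp tl by simp
    qed
  qed
  have v1: "(1-t)*a1 + t*b1 \<ge> 0" by (rule g[OF assms(1) assms(5) c1_def]) (auto simp add: t_def)
  have v2: "(1-t)*a2 + t*b2 \<ge> 0" by (rule g[OF assms(2) assms(6) c2_def]) (auto simp add: t_def)
  have v3: "(1-t)*a3 + t*b3 \<ge> 0" by (rule g[OF assms(3) assms(7) c3_def]) (auto simp add: t_def)
  have z: "(b1 < 0 \<and> (1-t)*a1 + t*b1 = 0) \<or> (b2 < 0 \<and> (1-t)*a2 + t*b2 = 0) \<or> (b3 < 0 \<and> (1-t)*a3 + t*b3 = 0)"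
  proof -
    have "t = c1 \<or> t = c2 \<or> t = c3" unfolding t_def by linarith
    moreover have "t = c1 \<Longrightarrow> b1 < 0" using tl unfolding c1_def by (cases "b1 < 0") auto
    moreover have "t = c2 \<Longrightarrow> b2 < 0" using tl unfolding c2_def by (cases "b2 < 0") auto
    moreover have "t = c3 \<Longrightarrow> b3 < 0" using tl unfolding c3_def by (cases "b3 < 0") auto
    ultimately show ?thesis using seg_aux0[of b1 a1] seg_aux0[of b2 a2] seg_aux0[of b3 a3] assms
      unfolding c1_def c2_def c3_def by auto
  qed
  show ?thesis using tp tl v1 v2 v3 z by blast
qed

lemma gpos_reindex:
  assumes "gpos p k" "\<And>i. i < k' \<Longrightarrow> f i < k" "inj_on f {..<k'}" "\<And>i. i < k' \<Longrightarrow> q i = p (f i)"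
  shows "gpos q k'"
  unfolding gpos_def
proof (intro allI impI)
  fix x y z assume h: "x < k'" "y < k'" "z < k'" "x \<noteq> y" "y \<noteq> z" "x \<noteq> z"
  have "f x \<noteq> f y" "f y \<noteq> f z" "f x \<noteq> f z" using assms(3) h unfolding inj_on_def by auto
  then show "det3 (q x) (q y) (q z) \<noteq> 0" using assms(1,2,4) h unfolding gpos_def by auto
qed

locale cctx =
  fixes p :: "nat \<Rightarrow> real^3" and k :: nat
  assumes k4: "4 \<le> k" and anti: "p k = - p 0" and gp: "gpos p k" and lt: "lturn p k"
    and nox: "\<not> chainX p k"
    and ih: "\<And>k' q. k' < k \<Longrightarrow> 2 \<le> k' \<Longrightarrow> q k' = - q 0 \<Longrightarrow> gpos q k' \<Longrightarrow> lturn q k' \<Longrightarrow> chainX q k'"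
begin

definition "Dl = det3 (p 0) (p 1) (p 2)"

definition intT :: "real^3 \<Rightarrow> bool" where
  "intT Y \<longleftrightarrow> det3 (p 0) (p 1) Y > 0 \<and> det3 (p 1) (p 2) Y > 0 \<and> det3 (p 2) (p 0) Y > 0"

definition exitX :: "nat \<Rightarrow> bool" where
  "exitX l \<longleftrightarrow> 3 \<le> l \<and> l < k \<and> (\<exists>Z. Z \<noteq> 0 \<and> Z \<in> cone2 (p 0) (p 2) \<and> Z \<in> cone2 (p l) (p (Suc l))
      \<and> det3 (p 0) (p 2) (p (Suc l)) > 0)"

lemma gp': "x < k \<Longrightarrow> y < k \<Longrightarrow> z < k \<Longrightarrow> x \<noteq> y \<Longrightarrow> y \<noteq> z \<Longrightarrow> x \<noteq> z \<Longrightarrow> det3 (p x) (p y) (p z) \<noteq> 0"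
  using gp unfolding gpos_def by blast

lemma ltu: "0 < i \<Longrightarrow> i < k \<Longrightarrow> det3 (p (i - 1)) (p i) (p (Suc i)) > 0"
  using lt unfolding lturn_def by blast

lemma Dpos: "Dl > 0"
  using ltu[of 1] k4 unfolding Dl_def by (simp add: numeral_2_eq_2)

lemma nox': "i + 2 \<le> j \<Longrightarrow> j < k \<Longrightarrow> \<not> meet (p i) (p (Suc i)) (p j) (p (Suc j))"
  using nox unfolding chainX_def by blast

lemma p0nz: "p 0 \<noteq> 0"
  using Dpos unfolding Dl_def by (auto simp: det3_expand)

lemma indep2:
  assumes "x < k" "y < k" "x \<noteq> y" "\<alpha> *\<^sub>R p x + \<beta> *\<^sub>R p y = 0"
  shows "\<alpha> = 0 \<and> \<beta> = 0"
proof -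
  obtain z where z: "z < k" "z \<noteq> x" "z \<noteq> y"
  proof (cases "0 \<noteq> x \<and> 0 \<noteq> y")
    case True then show ?thesis using that[of 0] k4 by auto
  next
    case False
    show ?thesis
    proof (cases "1 \<noteq> x \<and> 1 \<noteq> y")
      case True then show ?thesis using that[of 1] k4 by auto
    next
      case False
      then show ?thesis using that[of 2] k4 \<open>\<not> (0 \<noteq> x \<and> 0 \<noteq> y)\<close> assms(3) by auto
    qed
  qed
  have d: "det3 (p x) (p y) (p z) \<noteq> 0" using gp' assms z by auto
  have "det3 (\<alpha> *\<^sub>R p x + \<beta> *\<^sub>R p y) (p y) (p z) = 0" using assms(4) by (simp add: det3_expand)
  then have a: "\<alpha> = 0" using d by (simp add: det3_lin)
  have "det3 (p x) (\<alpha> *\<^sub>R p x + \<beta> *\<^sub>R p y) (p z) = 0" using assms(4) by (simp add: det3_expand)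
  then have b: "\<beta> = 0" using d by (simp add: det3_lin)
  show ?thesis using a b by simp
qed

lemma indepE:
  assumes "m < k" "\<alpha> *\<^sub>R p m + \<beta> *\<^sub>R p (Suc m) = 0"
  shows "\<alpha> = 0 \<and> \<beta> = 0"
proof (cases "Suc m < k")
  case True then show ?thesis using indep2[of m "Suc m" \<alpha> \<beta>] assms by simp
next
  case False
  then have sk: "Suc m = k" using assms by simp
  then have "\<alpha> *\<^sub>R p m + (- \<beta>) *\<^sub>R p 0 = 0" using assms(2) anti by simp
  moreover have "m \<noteq> 0" using sk k4 by simp
  ultimately show ?thesis using indep2[of m 0 \<alpha> "- \<beta>"] assms by simp
qed

lemma cramer: "Dl *\<^sub>R x = det3 (p 1) (p 2) x *\<^sub>R p 0 + det3 (p 2) (p 0) x *\<^sub>R p 1 + det3 (p 0) (p 1) x *\<^sub>R p 2"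
proof -
  have "det3 (p 1) (p 2) x *\<^sub>R p 0 - det3 (p 0) (p 2) x *\<^sub>R p 1 + det3 (p 0) (p 1) x *\<^sub>R p 2 - det3 (p 0) (p 1) (p 2) *\<^sub>R x = 0"
    by (rule master)
  moreover have "det3 (p 2) (p 0) x = - det3 (p 0) (p 2) x" by (rule det3_swap12)
  ultimately show ?thesis unfolding Dl_def by (simp add: algebra_simps)
qed

lemma side01: assumes "det3 (p 0) (p 1) Z = 0" "det3 (p 1) (p 2) Z \<ge> 0" "det3 (p 2) (p 0) Z \<ge> 0"
  shows "Z \<in> cone2 (p 0) (p 1)"
proof -
  have "Z = (1/Dl) *\<^sub>R (Dl *\<^sub>R Z)" using Dpos by simp
  also have "\<dots> = (1/Dl) *\<^sub>R (det3 (p 1) (p 2) Z *\<^sub>R p 0 + det3 (p 2) (p 0) Z *\<^sub>R p 1)"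
    using cramer[of Z] assms(1) by simp
  also have "\<dots> = (det3 (p 1) (p 2) Z / Dl) *\<^sub>R p 0 + (det3 (p 2) (p 0) Z / Dl) *\<^sub>R p 1"
    by (simp add: scaleR_right_distrib)
  finally show ?thesis unfolding cone2_def using assms Dpos by (intro CollectI exI[of _ "det3 (p 1) (p 2) Z / Dl"] exI[of _ "det3 (p 2) (p 0) Z / Dl"]) auto
qed


lemma side12: assumes "det3 (p 1) (p 2) Z = 0" "det3 (p 2) (p 0) Z \<ge> 0" "det3 (p 0) (p 1) Z \<ge> 0"
  shows "Z \<in> cone2 (p 1) (p 2)"
proof -
  have "Z = (1/Dl) *\<^sub>R (Dl *\<^sub>R Z)" using Dpos by simp
  also have "\<dots> = (1/Dl) *\<^sub>R (det3 (p 2) (p 0) Z *\<^sub>R p 1 + det3 (p 0) (p 1) Z *\<^sub>R p 2)"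
    using cramer[of Z] assms(1) by simp
  also have "\<dots> = (det3 (p 2) (p 0) Z / Dl) *\<^sub>R p 1 + (det3 (p 0) (p 1) Z / Dl) *\<^sub>R p 2"
    by (simp add: scaleR_right_distrib)
  finally show ?thesis unfolding cone2_def using assms Dpos by (intro CollectI exI[of _ "det3 (p 2) (p 0) Z / Dl"] exI[of _ "det3 (p 0) (p 1) Z / Dl"]) auto
qed

lemma side20: assumes "det3 (p 2) (p 0) Z = 0" "det3 (p 1) (p 2) Z \<ge> 0" "det3 (p 0) (p 1) Z \<ge> 0"
  shows "Z \<in> cone2 (p 0) (p 2)"
proof -
  have "Z = (1/Dl) *\<^sub>R (Dl *\<^sub>R Z)" using Dpos by simp
  also have "\<dots> = (1/Dl) *\<^sub>R (det3 (p 1) (p 2) Z *\<^sub>R p 0 + det3 (p 0) (p 1) Z *\<^sub>R p 2)"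
    using cramer[of Z] assms(1) by simp
  also have "\<dots> = (det3 (p 1) (p 2) Z / Dl) *\<^sub>R p 0 + (det3 (p 0) (p 1) Z / Dl) *\<^sub>R p 2"
    by (simp add: scaleR_right_distrib)
  finally show ?thesis unfolding cone2_def using assms Dpos by (intro CollectI exI[of _ "det3 (p 1) (p 2) Z / Dl"] exI[of _ "det3 (p 0) (p 1) Z / Dl"]) auto
qed

lemma det3_comb: "det3 a b ((1 - t) *\<^sub>R Y + t *\<^sub>R B) = (1 - t) * det3 a b Y + t * det3 a b B"
  by (simp add: det3_lin)

lemma segstep:
  assumes Y: "Y \<in> cone2 a b" and B: "B = a \<or> B = b"
    and ind: "\<And>\<alpha> \<beta>. \<alpha> *\<^sub>R a + \<beta> *\<^sub>R b = 0 \<Longrightarrow> \<alpha> = 0 \<and> \<beta> = 0"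
    and y1: "det3 (p 0) (p 1) Y \<ge> 0" and y2: "det3 (p 1) (p 2) Y \<ge> 0" and y3: "det3 (p 2) (p 0) Y \<ge> 0"
    and bneg: "det3 (p 0) (p 1) B < 0 \<or> det3 (p 1) (p 2) B < 0 \<or> det3 (p 2) (p 0) B < 0"
    and c1: "det3 (p 0) (p 1) B < 0 \<Longrightarrow> det3 (p 0) (p 1) Y > 0"
    and c2: "det3 (p 1) (p 2) B < 0 \<Longrightarrow> det3 (p 1) (p 2) Y > 0"
    and c3: "det3 (p 2) (p 0) B < 0 \<Longrightarrow> det3 (p 2) (p 0) Y > 0"
  shows "\<exists>Z. Z \<noteq> 0 \<and> Z \<in> cone2 a b \<and> (Z \<in> cone2 (p 0) (p 1) \<or> Z \<in> cone2 (p 1) (p 2)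
            \<or> (Z \<in> cone2 (p 0) (p 2) \<and> det3 (p 2) (p 0) B < 0))"
proof -
  obtain t where t: "0 < t" "t < 1"
    "(1-t)*det3 (p 0) (p 1) Y + t*det3 (p 0) (p 1) B \<ge> 0"
    "(1-t)*det3 (p 1) (p 2) Y + t*det3 (p 1) (p 2) B \<ge> 0"
    "(1-t)*det3 (p 2) (p 0) Y + t*det3 (p 2) (p 0) B \<ge> 0"
    "(det3 (p 0) (p 1) B < 0 \<and> (1-t)*det3 (p 0) (p 1) Y + t*det3 (p 0) (p 1) B = 0) \<or>
     (det3 (p 1) (p 2) B < 0 \<and> (1-t)*det3 (p 1) (p 2) Y + t*det3 (p 1) (p 2) B = 0) \<or>
     (det3 (p 2) (p 0) B < 0 \<and> (1-t)*det3 (p 2) (p 0) Y + t*det3 (p 2) (p 0) B = 0)"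
    using seg3[OF y1 y2 y3 bneg c1 c2 c3] by blast
  define Z where "Z = (1 - t) *\<^sub>R Y + t *\<^sub>R B"
  obtain \<alpha> \<beta> where ab: "\<alpha> \<ge> 0" "\<beta> \<ge> 0" "Y = \<alpha> *\<^sub>R a + \<beta> *\<^sub>R b" using Y unfolding cone2_def by blast
  have Zc: "Z \<in> cone2 a b \<and> Z \<noteq> 0"
  proof (cases "B = b")
    case True
    have e: "Z = ((1 - t) * \<alpha>) *\<^sub>R a + ((1 - t) * \<beta> + t) *\<^sub>R b"
      unfolding Z_def ab(3) True by (simp add: algebra_simps)
    have pos: "(1 - t) * \<beta> + t > 0" using t ab by (simp add: add_nonneg_pos)
    show ?thesis
    proof
      show "Z \<in> cone2 a b" unfolding cone2_def using e t ab pos by (intro CollectI exI[of _ "(1 - t) * \<alpha>"] exI[of _ "(1 - t) * \<beta> + t"]) auto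
      show "Z \<noteq> 0" using ind[of "(1 - t) * \<alpha>" "(1 - t) * \<beta> + t"] e pos by auto
    qed
  next
    case False
    then have Ba: "B = a" using B by simp
    have e: "Z = ((1 - t) * \<alpha> + t) *\<^sub>R a + ((1 - t) * \<beta>) *\<^sub>R b"
      unfolding Z_def ab(3) Ba by (simp add: algebra_simps)
    have pos: "(1 - t) * \<alpha> + t > 0" using t ab by (simp add: add_nonneg_pos)
    show ?thesis
    proof
      show "Z \<in> cone2 a b" unfolding cone2_def using e t ab pos by (intro CollectI exI[of _ "(1 - t) * \<alpha> + t"] exI[of _ "(1 - t) * \<beta>"]) auto
      show "Z \<noteq> 0" using ind[of "(1 - t) * \<alpha> + t" "(1 - t) * \<beta>"] e pos by auto
    qed
  qed
  have z1: "det3 (p 0) (p 1) Z = (1-t)*det3 (p 0) (p 1) Y + t*det3 (p 0) (p 1) B" unfolding Z_def by (rule det3_comb)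
  have z2: "det3 (p 1) (p 2) Z = (1-t)*det3 (p 1) (p 2) Y + t*det3 (p 1) (p 2) B" unfolding Z_def by (rule det3_comb)
  have z3: "det3 (p 2) (p 0) Z = (1-t)*det3 (p 2) (p 0) Y + t*det3 (p 2) (p 0) B" unfolding Z_def by (rule det3_comb)
  have "Z \<in> cone2 (p 0) (p 1) \<or> Z \<in> cone2 (p 1) (p 2) \<or> (Z \<in> cone2 (p 0) (p 2) \<and> det3 (p 2) (p 0) B < 0)"
    using t(6)
  proof (elim disjE)
    assume "det3 (p 0) (p 1) B < 0 \<and> (1-t)*det3 (p 0) (p 1) Y + t*det3 (p 0) (p 1) B = 0"
    then show ?thesis using side01[of Z] z1 z2 z3 t by simp
  next
    assume "det3 (p 1) (p 2) B < 0 \<and> (1-t)*det3 (p 1) (p 2) Y + t*det3 (p 1) (p 2) B = 0"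
    then show ?thesis using side12[of Z] z1 z2 z3 t by simp
  next
    assume "det3 (p 2) (p 0) B < 0 \<and> (1-t)*det3 (p 2) (p 0) Y + t*det3 (p 2) (p 0) B = 0"
    then show ?thesis using side20[of Z] z1 z2 z3 t by simp
  qed
  then show ?thesis using Zc by blast
qed


lemma f12pk: "det3 (p 1) (p 2) (p k) < 0"
proof -
  have "det3 (p 1) (p 2) (p k) = - det3 (p 1) (p 2) (p 0)" using anti by (simp add: det3_lin)
  also have "det3 (p 1) (p 2) (p 0) = Dl" unfolding Dl_def by (rule det3_cyc)
  finally show ?thesis using Dpos by simp
qed

lemma realX_contra:
  assumes "3 \<le> m" "m < k" "Z \<noteq> 0" "Z \<in> cone2 (p m) (p (Suc m))" "Z \<in> cone2 (p 0) (p 1) \<or> Z \<in> cone2 (p 1) (p 2)"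
  shows False
proof -
  have a: "\<not> meet (p 0) (p (Suc 0)) (p m) (p (Suc m))" using nox'[of 0 m] assms by simp
  have b: "\<not> meet (p 1) (p 2) (p m) (p (Suc m))" using nox'[of 1 m] assms by (simp add: eval_nat_numeral)
  show False using assms a b unfolding meet_def by auto
qed

lemma cone2_left: "a \<in> cone2 a b"
  unfolding cone2_def by (intro CollectI exI[of _ 1] exI[of _ 0]) simp

lemma stepCE:
  assumes m: "3 \<le> m" "m < k" and Y: "Y \<in> cone2 (p m) (p (Suc m))" and iY: "intT Y"
  shows "(intT (p (Suc m)) \<and> Suc m < k) \<or> exitX m"
proof (cases "intT (p (Suc m))")
  case True
  have "Suc m \<noteq> k" using True f12pk unfolding intT_def by auto
  then show ?thesis using True m by simp
next
  case False
  have neg: "det3 (p 0) (p 1) (p (Suc m)) < 0 \<or> det3 (p 1) (p 2) (p (Suc m)) < 0 \<or> det3 (p 2) (p 0) (p (Suc m)) < 0"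
  proof (cases "Suc m < k")
    case True
    have "det3 (p 0) (p 1) (p (Suc m)) \<noteq> 0" using gp'[of 0 1 "Suc m"] True m by simp
    moreover have "det3 (p 1) (p 2) (p (Suc m)) \<noteq> 0" using gp'[of 1 2 "Suc m"] True m by simp
    moreover have "det3 (p 2) (p 0) (p (Suc m)) \<noteq> 0" using gp'[of 2 0 "Suc m"] True m by simp
    ultimately show ?thesis using False unfolding intT_def by linarith
  next
    case False then have "Suc m = k" using m by simp
    then show ?thesis using f12pk by simp
  qed
  have "\<exists>Z. Z \<noteq> 0 \<and> Z \<in> cone2 (p m) (p (Suc m)) \<and> (Z \<in> cone2 (p 0) (p 1) \<or> Z \<in> cone2 (p 1) (p 2)
            \<or> (Z \<in> cone2 (p 0) (p 2) \<and> det3 (p 2) (p 0) (p (Suc m)) < 0))"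
    apply (rule segstep[OF Y])
    using iY neg indepE[OF m(2)] unfolding intT_def by auto
  then obtain Z where Z: "Z \<noteq> 0" "Z \<in> cone2 (p m) (p (Suc m))"
     "Z \<in> cone2 (p 0) (p 1) \<or> Z \<in> cone2 (p 1) (p 2) \<or> (Z \<in> cone2 (p 0) (p 2) \<and> det3 (p 2) (p 0) (p (Suc m)) < 0)"
    by blast
  show ?thesis
  proof (cases "Z \<in> cone2 (p 0) (p 1) \<or> Z \<in> cone2 (p 1) (p 2)")
    case True then show ?thesis using realX_contra[OF m Z(1,2)] by simp
  next
    case False
    then have "Z \<in> cone2 (p 0) (p 2)" "det3 (p 2) (p 0) (p (Suc m)) < 0" using Z by auto
    moreover have "det3 (p 2) (p 0) (p (Suc m)) = - det3 (p 0) (p 2) (p (Suc m))" by (rule det3_swap12)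
    ultimately have "exitX m" unfolding exitX_def using m Z by auto
    then show ?thesis by simp
  qed
qed

lemma CE: "3 \<le> m \<Longrightarrow> m < k \<Longrightarrow> Y \<in> cone2 (p m) (p (Suc m)) \<Longrightarrow> intT Y \<Longrightarrow> \<exists>l. m \<le> l \<and> exitX l"
proof (induction "k - m" arbitrary: m Y rule: less_induct)
  case less
  from stepCE[OF less.prems] show ?case
  proof
    assume h: "intT (p (Suc m)) \<and> Suc m < k"
    have "\<exists>l. Suc m \<le> l \<and> exitX l"
      using less.hyps[of "Suc m" "p (Suc m)"] less.prems h cone2_left by auto
    then show ?thesis by (auto intro: Suc_leD)
  next
    assume "exitX m" then show ?thesis by auto
  qed
qed


lemma chord:
  assumes Yn: "Y \<noteq> 0" and Y1: "Y \<in> cone2 (p 0) (p 2)" and Y2: "Y \<in> cone2 (p m) (p (Suc m))"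
    and m: "3 \<le> m" "m < k"
  shows "\<exists>l. m \<le> l \<and> exitX l"
proof -
  obtain la mu where lm: "la \<ge> 0" "mu \<ge> 0" "Y = la *\<^sub>R p 0 + mu *\<^sub>R p 2" using Y1 unfolding cone2_def by blast
  obtain al be where ab: "al \<ge> 0" "be \<ge> 0" "Y = al *\<^sub>R p m + be *\<^sub>R p (Suc m)" using Y2 unfolding cone2_def by blast
  have sm: "Suc m < k"
  proof (rule ccontr)
    assume "\<not> Suc m < k" then have sk: "Suc m = k" using m by simp
    have "det3 (p 0) (p 2) Y = 0" using lm by (simp add: det3_lin)
    moreover have "det3 (p 0) (p 2) Y = al * det3 (p 0) (p 2) (p m)" using ab sk anti by (simp add: det3_lin)
    moreover have "det3 (p 0) (p 2) (p m) \<noteq> 0" using gp'[of 0 2 m] m by simp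
    ultimately have a0: "al = 0" by simp
    have e: "la *\<^sub>R p 0 + mu *\<^sub>R p 2 = - (be *\<^sub>R p 0)" using lm ab sk anti a0 by simp
    have "(la + be) *\<^sub>R p 0 + mu *\<^sub>R p 2 = (la *\<^sub>R p 0 + mu *\<^sub>R p 2) + be *\<^sub>R p 0"
      by (simp add: algebra_simps)
    also have "\<dots> = 0" using e by simp
    finally have "(la + be) *\<^sub>R p 0 + mu *\<^sub>R p 2 = 0" .
    then have "la + be = 0 \<and> mu = 0" using indep2[of 0 2] k4 by simp
    then have "Y = 0" using lm ab by simp
    then show False using Yn by simp
  qed
  have sne: "det3 (p 0) (p 2) (p (Suc m)) \<noteq> 0" using gp'[of 0 2 "Suc m"] sm m by simp
  show ?thesis
  proof (cases "det3 (p 0) (p 2) (p (Suc m)) > 0")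
    case True then have "exitX m" unfolding exitX_def using m Yn Y1 Y2 by blast
    then show ?thesis by blast
  next
    case False then have sneg: "det3 (p 0) (p 2) (p (Suc m)) < 0" using sne by simp
    have dm: "det3 (p m) (p (Suc m)) Y = 0" using ab by (simp add: det3_lin)
    have lpos: "la > 0"
    proof (rule ccontr)
      assume "\<not> la > 0" then have l0: "la = 0" using lm by simp
      then have "mu * det3 (p m) (p (Suc m)) (p 2) = 0" using dm lm by (simp add: det3_lin)
      moreover have "det3 (p m) (p (Suc m)) (p 2) \<noteq> 0" using gp'[of m "Suc m" 2] m sm by simp
      ultimately have "mu = 0" by simp
      then show False using l0 lm Yn by simp
    qed
    have mpos: "mu > 0"
    proof (rule ccontr)
      assume "\<not> mu > 0" then have l0: "mu = 0" using lm by simp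
      then have "la * det3 (p m) (p (Suc m)) (p 0) = 0" using dm lm by (simp add: det3_lin)
      moreover have "det3 (p m) (p (Suc m)) (p 0) \<noteq> 0" using gp'[of m "Suc m" 0] m sm by simp
      ultimately have "la = 0" by simp
      then show False using l0 lm Yn by simp
    qed
    have c012: "det3 (p 1) (p 2) (p 0) = Dl" unfolding Dl_def by (rule det3_cyc)
    have f01Y: "det3 (p 0) (p 1) Y > 0" using lm mpos Dpos unfolding Dl_def by (simp add: det3_lin)
    have f12Y: "det3 (p 1) (p 2) Y > 0" using lm lpos Dpos c012 by (simp add: det3_lin)
    have f20Y: "det3 (p 2) (p 0) Y = 0" using lm by (simp add: det3_lin)
    have f20B: "det3 (p 2) (p 0) (p (Suc m)) > 0" using sneg det3_swap12[of "p 2" "p 0" "p (Suc m)"] by simp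
    show ?thesis
    proof (cases "det3 (p 0) (p 1) (p (Suc m)) < 0 \<or> det3 (p 1) (p 2) (p (Suc m)) < 0")
      case True
      have "\<exists>Z. Z \<noteq> 0 \<and> Z \<in> cone2 (p m) (p (Suc m)) \<and> (Z \<in> cone2 (p 0) (p 1) \<or> Z \<in> cone2 (p 1) (p 2)
            \<or> (Z \<in> cone2 (p 0) (p 2) \<and> det3 (p 2) (p 0) (p (Suc m)) < 0))"
        apply (rule segstep[OF Y2])
        using True f01Y f12Y f20Y f20B indepE[OF m(2)] by auto
      then obtain Z where Z: "Z \<noteq> 0" "Z \<in> cone2 (p m) (p (Suc m))" "Z \<in> cone2 (p 0) (p 1) \<or> Z \<in> cone2 (p 1) (p 2)"
        using f20B by auto
      then show ?thesis using realX_contra[OF m Z(1,2)] by simp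
    next
      case False
      have "det3 (p 0) (p 1) (p (Suc m)) \<noteq> 0" using gp'[of 0 1 "Suc m"] sm m by simp
      moreover have "det3 (p 1) (p 2) (p (Suc m)) \<noteq> 0" using gp'[of 1 2 "Suc m"] sm m by simp
      ultimately have "intT (p (Suc m))" using False f20B unfolding intT_def by linarith
      then obtain l where "Suc m \<le> l" "exitX l" using CE[of "Suc m" "p (Suc m)"] sm m cone2_left by auto
      then show ?thesis by (auto intro: Suc_leD)
    qed
  qed
qed


lemma noexit: assumes ne: "\<And>l. \<not> exitX l" shows False
proof -
  have s2: "det3 (p 0) (p 2) (p 3) \<noteq> 0" using gp'[of 0 2 3] k4 by simp
  have t2: "det3 (p 1) (p 2) (p 3) > 0" using ltu[of 2] k4 by (simp add: eval_nat_numeral)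
  show False
  proof (cases "det3 (p 0) (p 2) (p 3) < 0")
    case True
    have f20: "det3 (p 2) (p 0) (p 3) > 0" using True det3_swap12[of "p 2" "p 0" "p 3"] by simp
    have f01ne: "det3 (p 0) (p 1) (p 3) \<noteq> 0" using gp'[of 0 1 3] k4 by simp
    show False
    proof (cases "det3 (p 0) (p 1) (p 3) > 0")
      case True
      then have "intT (p 3)" using f20 t2 unfolding intT_def by simp
      then obtain l where "exitX l" using CE[of 3 "p 3"] k4 cone2_left by fastforce
      then show False using ne by blast
    next
      case False
      then have f01: "det3 (p 0) (p 1) (p 3) < 0" using f01ne by simp
      define W where "W = Dl *\<^sub>R p 3 + (- det3 (p 0) (p 1) (p 3)) *\<^sub>R p 2"
      have W2: "W = det3 (p 1) (p 2) (p 3) *\<^sub>R p 0 + (- det3 (p 0) (p 2) (p 3)) *\<^sub>R p 1"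
      proof -
        have "det3 (p 1) (p 2) (p 3) *\<^sub>R p 0 - det3 (p 0) (p 2) (p 3) *\<^sub>R p 1 + det3 (p 0) (p 1) (p 3) *\<^sub>R p 2 - det3 (p 0) (p 1) (p 2) *\<^sub>R p 3 = 0"
          by (rule master)
        then show ?thesis unfolding W_def Dl_def by (simp add: algebra_simps)
      qed
      have Wa: "W \<in> cone2 (p 2) (p 3)" unfolding cone2_def W_def using f01 Dpos
        by (intro CollectI exI[of _ "- det3 (p 0) (p 1) (p 3)"] exI[of _ Dl]) auto
      have Wb: "W \<in> cone2 (p 0) (p 1)" unfolding cone2_def W2 using t2 True
        by (intro CollectI exI[of _ "det3 (p 1) (p 2) (p 3)"] exI[of _ "- det3 (p 0) (p 2) (p 3)"]) auto
      have Wn: "W \<noteq> 0"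
      proof
        assume "W = 0"
        then have "(- det3 (p 0) (p 1) (p 3)) *\<^sub>R p 2 + Dl *\<^sub>R p 3 = 0" unfolding W_def by (simp add: algebra_simps)
        then have "Dl = 0" using indep2[of 2 3 "- det3 (p 0) (p 1) (p 3)" Dl] k4 by linarith
        then show False using Dpos by simp
      qed
      have "meet (p 0) (p (Suc 0)) (p 2) (p (Suc 2))" unfolding meet_def using Wa Wb Wn by (auto simp: eval_nat_numeral)
      then show False using nox'[of 0 2] k4 by simp
    qed
  next
    case False
    then have s2p: "det3 (p 0) (p 2) (p 3) > 0" using s2 by simp
    define q where "q i = (if i = 0 then p 0 else p (Suc i))" for i
    have "chainX q (k - 1)"
    proof (rule ih)
      show "k - 1 < k" using k4 by simp
      show "2 \<le> k - 1" using k4 by simp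
      show "q (k - 1) = - q 0" using anti k4 unfolding q_def by simp
      show "gpos q (k - 1)"
        by (rule gpos_reindex[OF gp, of _ "\<lambda>i. if i = 0 then 0 else Suc i"]) (auto simp: q_def inj_on_def)
      show "lturn q (k - 1)" unfolding lturn_def
      proof (intro allI impI)
        fix i assume i: "0 < i" "i < k - 1"
        show "det3 (q (i - 1)) (q i) (q (Suc i)) > 0"
        proof (cases "i = 1")
          case True then show ?thesis using s2p unfolding q_def by (simp add: eval_nat_numeral)
        next
          case False
          then have "det3 (p (Suc i - 1)) (p (Suc i)) (p (Suc (Suc i))) > 0" using ltu[of "Suc i"] i by simp
          then show ?thesis using i False unfolding q_def by (simp add: Suc_pred)
        qed
      qed
    qed
    then obtain i j where ij: "i + 2 \<le> j" "j < k - 1" "meet (q i) (q (Suc i)) (q j) (q (Suc j))"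
      unfolding chainX_def by blast
    show False
    proof (cases "i = 0")
      case True
      then have "meet (p 0) (p 2) (p (Suc j)) (p (Suc (Suc j)))" using ij unfolding q_def by (simp add: eval_nat_numeral)
      then obtain Y where Y: "Y \<noteq> 0" "Y \<in> cone2 (p 0) (p 2)" "Y \<in> cone2 (p (Suc j)) (p (Suc (Suc j)))"
        unfolding meet_def by blast
      have jj: "3 \<le> Suc j" "Suc j < k" using ij True by auto
      obtain l where "exitX l" using chord[OF Y jj] by blast
      then show False using ne by blast
    next
      case False
      then have "meet (p (Suc i)) (p (Suc (Suc i))) (p (Suc j)) (p (Suc (Suc j)))" using ij unfolding q_def by simp
      then show False using nox'[of "Suc i" "Suc j"] ij by simp
    qed
  qed
qed


lemma withexit: assumes ex: "\<exists>l. exitX l" shows False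
proof -
  define j where "j = (GREATEST l. exitX l)"
  have bnd: "\<And>l. exitX l \<Longrightarrow> l \<le> k" unfolding exitX_def by auto
  have ej: "exitX j" unfolding j_def using GreatestI_ex_nat[OF ex bnd] .
  have jmax: "\<And>l. exitX l \<Longrightarrow> l \<le> j" unfolding j_def using Greatest_le_nat bnd by blast
  from ej obtain Z where j: "3 \<le> j" "j < k" and Z: "Z \<noteq> 0" "Z \<in> cone2 (p 0) (p 2)" "Z \<in> cone2 (p j) (p (Suc j))"
    and pos: "det3 (p 0) (p 2) (p (Suc j)) > 0" unfolding exitX_def by blast
  obtain la mu where lm: "la \<ge> 0" "mu \<ge> 0" "Z = la *\<^sub>R p 0 + mu *\<^sub>R p 2" using Z(2) unfolding cone2_def by blast
  obtain al be where ab: "al \<ge> 0" "be \<ge> 0" "Z = al *\<^sub>R p j + be *\<^sub>R p (Suc j)" using Z(3) unfolding cone2_def by blast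
  have sj: "Suc j < k"
  proof (rule ccontr)
    assume "\<not> Suc j < k" then have "Suc j = k" using j by simp
    then have "det3 (p 0) (p 2) (p (Suc j)) = 0" using anti by (simp add: det3_lin)
    then show False using pos by simp
  qed
  have dZj: "det3 (p j) (p (Suc j)) Z = 0" using ab by (simp add: det3_lin)
  have dZ02: "det3 (p 0) (p 2) Z = 0" using lm by (simp add: det3_lin)
  have mpos: "mu > 0"
  proof (rule ccontr)
    assume "\<not> mu > 0" then have m0: "mu = 0" using lm by simp
    then have "la * det3 (p j) (p (Suc j)) (p 0) = 0" using dZj lm by (simp add: det3_lin)
    moreover have "det3 (p j) (p (Suc j)) (p 0) \<noteq> 0" using gp'[of j "Suc j" 0] j sj by simp
    ultimately have "la = 0" by simp
    then show False using m0 lm Z by simp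
  qed
  have lpos: "la > 0"
  proof (rule ccontr)
    assume "\<not> la > 0" then have m0: "la = 0" using lm by simp
    then have "mu * det3 (p j) (p (Suc j)) (p 2) = 0" using dZj lm by (simp add: det3_lin)
    moreover have "det3 (p j) (p (Suc j)) (p 2) \<noteq> 0" using gp'[of j "Suc j" 2] j sj by simp
    ultimately have "mu = 0" by simp
    then show False using mpos by simp
  qed
  have apos: "al > 0"
  proof (rule ccontr)
    assume "\<not> al > 0" then have m0: "al = 0" using ab by simp
    then have "be * det3 (p 0) (p 2) (p (Suc j)) = 0" using dZ02 ab by (simp add: det3_lin)
    then have "be = 0" using pos by simp
    then show False using m0 ab Z by simp
  qed
  have bpos: "be > 0"
  proof (rule ccontr)
    assume "\<not> be > 0" then have m0: "be = 0" using ab by simp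
    then have "al * det3 (p 0) (p 2) (p j) = 0" using dZ02 ab by (simp add: det3_lin)
    moreover have "det3 (p 0) (p 2) (p j) \<noteq> 0" using gp'[of 0 2 j] j by simp
    ultimately have "al = 0" by simp
    then show False using apos by simp
  qed
  have turn: "det3 (p 0) (p j) (p (Suc j)) > 0"
  proof -
    have "det3 (p 0) Z (p (Suc j)) = al * det3 (p 0) (p j) (p (Suc j))" using ab by (simp add: det3_lin)
    moreover have "det3 (p 0) Z (p (Suc j)) = mu * det3 (p 0) (p 2) (p (Suc j))" using lm by (simp add: det3_lin)
    ultimately have "al * det3 (p 0) (p j) (p (Suc j)) = mu * det3 (p 0) (p 2) (p (Suc j))" by simp
    then have "al * det3 (p 0) (p j) (p (Suc j)) > 0" using mult_pos_pos[OF mpos pos] by linarith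
    then show ?thesis using apos by (simp add: zero_less_mult_iff)
  qed
  have f20j: "det3 (p 2) (p 0) (p j) > 0"
  proof -
    have "al * det3 (p 0) (p 2) (p j) + be * det3 (p 0) (p 2) (p (Suc j)) = 0" using dZ02 ab by (simp add: det3_lin)
    then have "al * det3 (p 0) (p 2) (p j) < 0" using bpos pos
      by (smt (verit) mult_pos_pos)
    then have "det3 (p 0) (p 2) (p j) < 0" using apos by (simp add: mult_less_0_iff)
    then show ?thesis using det3_swap12[of "p 2" "p 0" "p j"] by simp
  qed
  have c012: "det3 (p 1) (p 2) (p 0) = Dl" unfolding Dl_def by (rule det3_cyc)
  have f01Z: "det3 (p 0) (p 1) Z > 0" using lm mpos Dpos unfolding Dl_def by (simp add: det3_lin)
  have f12Z: "det3 (p 1) (p 2) Z > 0" using lm lpos Dpos c012 by (simp add: det3_lin)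
  have f20Z: "det3 (p 2) (p 0) Z = 0" using lm by (simp add: det3_lin)
  have intj: "intT (p j)"
  proof (cases "det3 (p 0) (p 1) (p j) < 0 \<or> det3 (p 1) (p 2) (p j) < 0")
    case True
    have "\<exists>Z'. Z' \<noteq> 0 \<and> Z' \<in> cone2 (p j) (p (Suc j)) \<and> (Z' \<in> cone2 (p 0) (p 1) \<or> Z' \<in> cone2 (p 1) (p 2)
            \<or> (Z' \<in> cone2 (p 0) (p 2) \<and> det3 (p 2) (p 0) (p j) < 0))"
      apply (rule segstep[OF Z(3)])
      using True f01Z f12Z f20Z f20j indepE[OF j(2)] by auto
    then obtain Z' where Z': "Z' \<noteq> 0" "Z' \<in> cone2 (p j) (p (Suc j))" "Z' \<in> cone2 (p 0) (p 1) \<or> Z' \<in> cone2 (p 1) (p 2)"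
      using f20j by auto
    then show ?thesis using realX_contra[OF j Z'(1,2)] by simp
  next
    case False
    have "det3 (p 0) (p 1) (p j) \<noteq> 0" using gp'[of 0 1 j] j by simp
    moreover have "det3 (p 1) (p 2) (p j) \<noteq> 0" using gp'[of 1 2 j] j by simp
    ultimately show ?thesis using False f20j unfolding intT_def by linarith
  qed
  define q where "q i = (if i = 0 then p 0 else p (i + j - 1))" for i
  define k' where "k' = k + 1 - j"
  have "chainX q k'"
  proof (rule ih)
    show "k' < k" using j unfolding k'_def by simp
    show "2 \<le> k'" using sj unfolding k'_def by simp
    show "q k' = - q 0" using anti j sj unfolding q_def k'_def by simp
    show "gpos q k'"
      by (rule gpos_reindex[OF gp, of _ "\<lambda>i. if i = 0 then 0 else i + j - 1"]) (use j in \<open>auto simp: q_def k'_def inj_on_def\<close>)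
    show "lturn q k'" unfolding lturn_def
    proof (intro allI impI)
      fix i assume i: "0 < i" "i < k'"
      show "det3 (q (i - 1)) (q i) (q (Suc i)) > 0"
      proof (cases "i = 1")
        case True then show ?thesis using turn j unfolding q_def by simp
      next
        case False
        have "det3 (p (i + j - 1 - 1)) (p (i + j - 1)) (p (Suc (i + j - 1))) > 0"
          using ltu[of "i + j - 1"] i j unfolding k'_def by simp
        moreover have "i + j - 1 - 1 = i - 1 + j - 1" "Suc (i + j - 1) = Suc i + j - 1" using i j False by auto
        ultimately show ?thesis using i False unfolding q_def by simp
      qed
    qed
  qed
  then obtain a b where ab2: "a + 2 \<le> b" "b < k'" "meet (q a) (q (Suc a)) (q b) (q (Suc b))"
    unfolding chainX_def by blast
  define m where "m = b + j - 1"
  have mm: "j + 1 \<le> m" "m < k" "q b = p m" "q (Suc b) = p (Suc m)" using ab2 j unfolding m_def q_def k'_def by auto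
  show False
  proof (cases "a = 0")
    case True
    then have "meet (p 0) (p j) (p m) (p (Suc m))" using ab2 mm j unfolding q_def by simp
    then obtain Y where Y: "Y \<noteq> 0" "Y \<in> cone2 (p 0) (p j)" "Y \<in> cone2 (p m) (p (Suc m))"
      unfolding meet_def by blast
    obtain la' mu' where lm': "la' \<ge> 0" "mu' \<ge> 0" "Y = la' *\<^sub>R p 0 + mu' *\<^sub>R p j" using Y(2) unfolding cone2_def by blast
    obtain al' be' where ab': "al' \<ge> 0" "be' \<ge> 0" "Y = al' *\<^sub>R p m + be' *\<^sub>R p (Suc m)" using Y(3) unfolding cone2_def by blast
    have mu'pos: "mu' > 0"
    proof (rule ccontr)
      assume "\<not> mu' > 0" then have m0: "mu' = 0" using lm' by simp
      then have la'pos: "la' > 0" using Y(1) lm' by (cases "la' = 0") auto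
      show False
      proof (cases "Suc m < k")
        case True
        have "det3 (p m) (p (Suc m)) Y = 0" using ab' by (simp add: det3_lin)
        then have "la' * det3 (p m) (p (Suc m)) (p 0) = 0" using lm' m0 by (simp add: det3_lin)
        moreover have "det3 (p m) (p (Suc m)) (p 0) \<noteq> 0" using gp'[of m "Suc m" 0] True mm j by simp
        ultimately show False using la'pos by simp
      next
        case False
        then have sk: "Suc m = k" using mm by simp
        have e: "al' *\<^sub>R p m - be' *\<^sub>R p 0 = la' *\<^sub>R p 0" using ab' lm' m0 sk anti by simp
        have "al' *\<^sub>R p m + (- (be' + la')) *\<^sub>R p 0 = al' *\<^sub>R p m - be' *\<^sub>R p 0 - la' *\<^sub>R p 0"
          by (simp add: algebra_simps)
        also have "\<dots> = 0" using e by simp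
        finally have fe: "al' *\<^sub>R p m + (- (be' + la')) *\<^sub>R p 0 = 0" .
        have i2: "m < k" "0 < k" "m \<noteq> 0" using mm j by auto
        have "al' = 0 \<and> - (be' + la') = 0" by (rule indep2[OF i2 fe])
        then show False using la'pos ab' by simp
      qed
    qed
    have iY: "intT Y"
    proof -
      have "det3 (p 0) (p 1) Y = mu' * det3 (p 0) (p 1) (p j)" using lm' by (simp add: det3_lin)
      moreover have "det3 (p 1) (p 2) Y = la' * Dl + mu' * det3 (p 1) (p 2) (p j)" using lm' c012 by (simp add: det3_lin)
      moreover have "det3 (p 2) (p 0) Y = mu' * det3 (p 2) (p 0) (p j)" using lm' by (simp add: det3_lin)
      ultimately show ?thesis using intj mu'pos lm' Dpos unfolding intT_def
        by (simp add: add_nonneg_pos)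
    qed
    obtain l where "m \<le> l" "exitX l" using CE[OF _ mm(2) Y(3) iY] mm j by auto
    then show False using jmax[of l] mm by simp
  next
    case False
    define a' where "a' = a + j - 1"
    have aa: "q a = p a'" "q (Suc a) = p (Suc a')" "a' + 2 \<le> m" using False ab2 j unfolding q_def a'_def m_def by auto
    then show False using nox'[of a' m] ab2 mm by simp
  qed
qed

lemma contradiction: False
  using withexit noexit by blast

end

lemma chain_lemma:
  assumes "2 \<le> k" "p k = - p 0" "gpos p k" "lturn p k"
  shows "chainX p k"
  using assms
proof (induction k arbitrary: p rule: less_induct)
  case (less k p)
  show ?case
  proof (cases "4 \<le> k")
    case True
    show ?thesis
    proof (rule ccontr)
      assume "\<not> chainX p k"
      then interpret cctx p k using True less by unfold_locales auto
      show False by (rule contradiction)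
    qed
  next
    case False
    then have "k = 2 \<or> k = 3" using less.prems by auto
    have h: "\<And>i. 0 < i \<Longrightarrow> i < k \<Longrightarrow> det3 (p (i - 1)) (p i) (p (Suc i)) > 0"
      using less.prems(4) unfolding lturn_def by blast
    from \<open>k = 2 \<or> k = 3\<close> show ?thesis
    proof
      assume k2: "k = 2"
      have "det3 (p 0) (p 1) (p 2) > 0" using h[of 1] k2 by (simp add: eval_nat_numeral)
      moreover have "det3 (p 0) (p 1) (p 2) = 0" using less.prems(2) k2 by (simp add: det3_lin)
      ultimately show ?thesis by simp
    next
      assume k3: "k = 3"
      have "det3 (p 0) (p 1) (p 2) > 0" using h[of 1] k3 by (simp add: eval_nat_numeral)
      moreover have "det3 (p 1) (p 2) (p 3) > 0" using h[of 2] k3 by (simp add: eval_nat_numeral)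
      moreover have "det3 (p 1) (p 2) (p 3) = - det3 (p 0) (p 1) (p 2)"
      proof -
        have c: "det3 (p 1) (p 2) (p 0) = det3 (p 0) (p 1) (p 2)" by (rule det3_cyc)
        have "det3 (p 1) (p 2) (p 3) = - det3 (p 1) (p 2) (p 0)" using less.prems(2) k3 by (simp add: det3_neg3)
        then show ?thesis using c by simp
      qed
      ultimately show ?thesis by simp
    qed
  qed
qed

lemma modne: "0 < d \<Longrightarrow> d < (n::nat) \<Longrightarrow> (a + d) mod n \<noteq> a mod n"
proof
  assume h: "0 < d" "d < n" "(a + d) mod n = a mod n"
  then have "n dvd (a + d) - a" using mod_eq_dvd_iff_nat[of a "a + d" n] by simp
  then have "n dvd d" by simp
  then show False using h by (auto dest: dvd_imp_le)
qed

lemma mod_inj_window: "a \<le> (v::nat) \<Longrightarrow> v < a + M \<Longrightarrow> a \<le> w \<Longrightarrow> w < a + M \<Longrightarrow> v mod M = w mod M \<Longrightarrow> v = w"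
proof (rule ccontr)
  assume h: "a \<le> v" "v < a + M" "a \<le> w" "w < a + M" "v mod M = w mod M" "v \<noteq> w"
  show False
  proof (cases "v < w")
    case True
    have d: "0 < w - v" "w - v < M" using h True by auto
    have "(v + (w - v)) mod M \<noteq> v mod M" by (rule modne[OF d])
    then show False using h True by simp
  next
    case False
    have d: "0 < v - w" "v - w < M" using h False by auto
    have "(w + (v - w)) mod M \<noteq> w mod M" by (rule modne[OF d])
    then show False using h False by simp
  qed
qed

lemma mod2: "x < 2 * M \<Longrightarrow> (x::nat) mod M = (if x < M then x else x - M)"
  by (simp add: le_mod_geq)

lemma ivt_nat:
  fixes f :: "nat \<Rightarrow> real"
  assumes nz: "\<And>z. f z \<noteq> 0" and "f x < 0" "f y > 0" "x \<le> y"
  shows "\<exists>z. x \<le> z \<and> z < y \<and> f z < 0 \<and> f (Suc z) > 0"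
  using assms(4,3)
proof (induction y rule: dec_induct)
  case base then show ?case using assms(2) by simp
next
  case (step y)
  show ?case
  proof (cases "f y < 0")
    case True then show ?thesis using step by auto
  next
    case False then have "f y > 0" using nz[of y] by linarith
    then obtain z where "x \<le> z" "z < y" "f z < 0" "f (Suc z) > 0" using step.IH by blast
    then show ?thesis by (intro exI[of _ z]) simp
  qed
qed

lemma ivt_nat':
  fixes f :: "nat \<Rightarrow> real"
  assumes nz: "\<And>z. f z \<noteq> 0" and "f x > 0" "f y < 0" "x \<le> y"
  shows "\<exists>z. x \<le> z \<and> z < y \<and> f z > 0 \<and> f (Suc z) < 0"
  using ivt_nat[of "\<lambda>z. - f z" x y] assms by auto

lemma sph_arc_neg: "sph_arc (- a) (- b) = uminus ` sph_arc a b"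
proof -
  have "sph_arc (- a) (- b) = {- sgn ((1 - t) *\<^sub>R a + t *\<^sub>R b) | t. 0 \<le> t \<and> t \<le> 1}"
    unfolding sph_arc_def by (simp add: sgn_minus[symmetric] algebra_simps)
  also have "\<dots> = uminus ` sph_arc a b" unfolding sph_arc_def by auto
  finally show ?thesis .
qed

lemma meet_arc:
  assumes "meet a b c d" shows "sph_arc a b \<inter> sph_arc c d \<noteq> {}"
proof -
  obtain Z where Z: "Z \<noteq> 0" "Z \<in> cone2 a b" "Z \<in> cone2 c d" using assms unfolding meet_def by blast
  have mem: "sgn Z \<in> sph_arc x y" if h: "Z \<in> cone2 x y" for x y
  proof -
    obtain al be where ab: "al \<ge> 0" "be \<ge> 0" "Z = al *\<^sub>R x + be *\<^sub>R y" using h unfolding cone2_def by blast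
    have s: "al + be > 0"
    proof (rule ccontr)
      assume "\<not> al + be > 0" then have "al = 0" "be = 0" using ab by auto
      then show False using ab Z(1) by simp
    qed
    define t where "t = be / (al + be)"
    have t: "0 \<le> t" "t \<le> 1" using ab s unfolding t_def by auto
    have t1: "1 - t = al / (al + be)" using s unfolding t_def by (simp add: field_simps)
    have "(1 - t) *\<^sub>R x + t *\<^sub>R y = (al / (al + be)) *\<^sub>R x + (be / (al + be)) *\<^sub>R y"
      unfolding t1 unfolding t_def by simp
    also have "\<dots> = (1 / (al + be)) *\<^sub>R (al *\<^sub>R x + be *\<^sub>R y)" by (simp add: scaleR_add_right)
    finally have "(1 - t) *\<^sub>R x + t *\<^sub>R y = (1 / (al + be)) *\<^sub>R Z" using ab(3) by simp
    then have eq: "sgn ((1 - t) *\<^sub>R x + t *\<^sub>R y) = sgn Z" using s by (simp add: sgn_scaleR)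
    show ?thesis unfolding sph_arc_def
      by (rule CollectI, rule exI[of _ t]) (simp add: eq t)
  qed
  show ?thesis using mem[OF Z(2)] mem[OF Z(3)] by blast
qed

lemma arc_antipodal_disjoint:
  assumes ind: "\<And>al be. al *\<^sub>R a + be *\<^sub>R b = 0 \<Longrightarrow> al = 0 \<and> be = 0"
  shows "sph_arc a b \<inter> uminus ` sph_arc a b = {}"
proof (rule ccontr)
  assume "sph_arc a b \<inter> uminus ` sph_arc a b \<noteq> {}"
  then obtain x where x1: "x \<in> sph_arc a b" and x2: "x \<in> uminus ` sph_arc a b" by blast
  obtain t where t: "0 \<le> t" "t \<le> 1" "x = sgn ((1 - t) *\<^sub>R a + t *\<^sub>R b)" using x1 unfolding sph_arc_def by blast
  obtain y where y: "y \<in> sph_arc a b" "x = - y" using x2 by blast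
  obtain s where s: "0 \<le> s" "s \<le> 1" "y = sgn ((1 - s) *\<^sub>R a + s *\<^sub>R b)" using y(1) unfolding sph_arc_def by blast
  have ts: "0 \<le> t" "t \<le> 1" "0 \<le> s" "s \<le> 1" using t s by auto
  have e: "sgn ((1 - t) *\<^sub>R a + t *\<^sub>R b) = - sgn ((1 - s) *\<^sub>R a + s *\<^sub>R b)" using t(3) s(3) y(2) by simp
  define v where "v = (1 - t) *\<^sub>R a + t *\<^sub>R b"
  define w where "w = (1 - s) *\<^sub>R a + s *\<^sub>R b"
  have vnz: "v \<noteq> 0" using ind[of "1 - t" t] unfolding v_def by auto
  have wnz: "w \<noteq> 0" using ind[of "1 - s" s] unfolding w_def by auto
  have nv: "norm v > 0" "norm w > 0" using vnz wnz by auto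
  have eq: "v /\<^sub>R norm v = - (w /\<^sub>R norm w)" using e unfolding v_def w_def sgn_div_norm by simp
  have "(norm v * norm w) *\<^sub>R (v /\<^sub>R norm v) = (norm v * norm w) *\<^sub>R (- (w /\<^sub>R norm w))" using eq by simp
  moreover have "(norm v * norm w) *\<^sub>R (v /\<^sub>R norm v) = norm w *\<^sub>R v" using nv by (simp add: scaleR_scaleR)
  moreover have "(norm v * norm w) *\<^sub>R (- (w /\<^sub>R norm w)) = - (norm v *\<^sub>R w)" using nv by (simp add: scaleR_scaleR)
  ultimately have "norm w *\<^sub>R v + norm v *\<^sub>R w = 0" by simp
  then have "(norm w * (1 - t) + norm v * (1 - s)) *\<^sub>R a + (norm w * t + norm v * s) *\<^sub>R b = 0"
    unfolding v_def w_def by (simp add: algebra_simps)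
  then have c: "norm w * (1 - t) + norm v * (1 - s) = 0" "norm w * t + norm v * s = 0" using ind by blast+
  have "norm w * t \<ge> 0" "norm v * s \<ge> 0" "norm w * (1 - t) \<ge> 0" "norm v * (1 - s) \<ge> 0" using ts nv by auto
  then have h0: "norm w * t = 0" "norm w * (1 - t) = 0" using c by linarith+
  have "norm w * t + norm w * (1 - t) = 0" by (simp only: h0)
  then have "norm w = 0" by (simp add: algebra_simps)
  then show False using nv by simp
qed


lemma modne2: "x < n \<Longrightarrow> y < n \<Longrightarrow> x \<noteq> y \<Longrightarrow> (a + x) mod (n::nat) \<noteq> (a + y) mod n"
proof -
  assume h: "x < n" "y < n" "x \<noteq> y"
  show ?thesis
  proof (cases "x < y")
    case True
    have "((a + x) + (y - x)) mod n \<noteq> (a + x) mod n" by (rule modne) (use h True in auto)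
    then show ?thesis using True by simp
  next
    case False
    have "((a + y) + (x - y)) mod n \<noteq> (a + y) mod n" by (rule modne) (use h False in auto)
    then show ?thesis using False h by simp
  qed
qed

locale spoly =
  fixes n :: nat and u :: "nat \<Rightarrow> real^3"
  assumes n3: "2 * n \<ge> 6"
    and symmetric: "\<forall>i < 2 * n. u ((i + n) mod (2 * n)) = - u i"
    and general: "\<forall>i < 2 * n. \<forall>j < 2 * n. \<forall>k < 2 * n.
                    i mod n \<noteq> j mod n \<and> j mod n \<noteq> k mod n \<and> i mod n \<noteq> k mod n
                    \<longrightarrow> det3 (u i) (u j) (u k) \<noteq> 0"
begin

definition D :: "nat \<Rightarrow> real" where
  "D x = det3 (u ((x + 2 * n - 1) mod (2 * n))) (u (x mod (2 * n))) (u (Suc x mod (2 * n)))"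

lemma nge: "3 \<le> n" using n3 by simp

lemma umod: "u ((y + n) mod (2 * n)) = - u (y mod (2 * n))"
proof -
  have "y mod (2 * n) < 2 * n" using nge by simp
  then have "u (((y mod (2 * n)) + n) mod (2 * n)) = - u (y mod (2 * n))" using symmetric by blast
  moreover have "((y mod (2 * n)) + n) mod (2 * n) = (y + n) mod (2 * n)" by (simp add: mod_add_left_eq)
  ultimately show ?thesis by simp
qed

lemma gen': "a mod n \<noteq> b mod n \<Longrightarrow> b mod n \<noteq> c mod n \<Longrightarrow> a mod n \<noteq> c mod n
   \<Longrightarrow> det3 (u (a mod (2 * n))) (u (b mod (2 * n))) (u (c mod (2 * n))) \<noteq> 0"
proof -
  assume h: "a mod n \<noteq> b mod n" "b mod n \<noteq> c mod n" "a mod n \<noteq> c mod n"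
  have mm: "x mod (2 * n) mod n = x mod n" for x by (rule mod_mod_cancel) simp
  have lt: "x mod (2 * n) < 2 * n" for x using nge by simp
  have g: "\<And>i j k. i < 2 * n \<Longrightarrow> j < 2 * n \<Longrightarrow> k < 2 * n \<Longrightarrow> i mod n \<noteq> j mod n
     \<Longrightarrow> j mod n \<noteq> k mod n \<Longrightarrow> i mod n \<noteq> k mod n \<Longrightarrow> det3 (u i) (u j) (u k) \<noteq> 0"
    using general by simp
  show ?thesis by (rule g) (use h lt in \<open>simp_all add: mm\<close>)
qed

lemma D_mod: "D (x mod (2 * n)) = D x"
proof -
  have e1: "(x mod (2 * n) + 2 * n - 1) mod (2 * n) = (x + 2 * n - 1) mod (2 * n)"
  proof -
    have "x mod (2 * n) + 2 * n - 1 = x mod (2 * n) + (2 * n - 1)" "x + 2 * n - 1 = x + (2 * n - 1)" using nge by auto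
    then show ?thesis by (simp add: mod_add_left_eq)
  qed
  have e2: "Suc (x mod (2 * n)) mod (2 * n) = Suc x mod (2 * n)" by (simp add: mod_Suc_eq)
  show ?thesis unfolding D_def e1 e2 by simp
qed

lemma D_anti: "D (x + n) = - D x"
proof -
  have e1: "(x + n + 2 * n - 1) mod (2 * n) = ((x + 2 * n - 1) + n) mod (2 * n)" using nge by (simp add: algebra_simps)
  have e3: "Suc (x + n) = Suc x + n" by simp
  show ?thesis unfolding D_def e1 e3 umod by (simp add: det3_lin)
qed

lemma D_nz: "D x \<noteq> 0"
proof -
  define c where "c = x + 2 * n - 1"
  have c1: "x mod n = (c + 1) mod n"
  proof -
    have "c + 1 = x + n * 2" unfolding c_def using nge by simp
    then show ?thesis by simp
  qed
  have c2: "Suc x mod n = (c + 2) mod n"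
  proof -
    have "c + 2 = Suc x + n * 2" unfolding c_def using nge by simp
    then show ?thesis by simp
  qed
  have d1: "(c + 1) mod n \<noteq> c mod n" by (rule modne) (use nge in auto)
  have d2: "(c + 2) mod n \<noteq> c mod n" by (rule modne) (use nge in auto)
  have d3: "((c + 1) + 1) mod n \<noteq> (c + 1) mod n" by (rule modne) (use nge in auto)
  show ?thesis unfolding D_def c_def[symmetric]
    by (rule gen') (use c1 c2 d1 d2 d3 in \<open>auto simp: add.assoc\<close>)
qed

lemma D_Suc: "det3 (u (i mod (2 * n))) (u (Suc i mod (2 * n))) (u ((i + 2) mod (2 * n))) = D (Suc i)"
proof -
  have "Suc i + 2 * n - 1 = i + 2 * n" using nge by simp
  then have "(Suc i + 2 * n - 1) mod (2 * n) = i mod (2 * n)" by simp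
  moreover have "Suc (Suc i) = i + 2" by simp
  ultimately show ?thesis unfolding D_def by simp
qed

lemma infl_eq: "inflections (2 * n) u = {i. i < 2 * n \<and> D i * D (Suc i) < 0}"
  unfolding inflections_def D_Suc D_def[symmetric] ..

lemma infl_mem: "D c * D (Suc c) < 0 \<Longrightarrow> c mod (2 * n) \<in> inflections (2 * n) u"
proof -
  assume h: "D c * D (Suc c) < 0"
  have "D (Suc (c mod (2 * n))) = D (Suc c)"
    by (metis D_mod mod_Suc_eq)
  then show ?thesis unfolding infl_eq using h D_mod[of c] nge by simp
qed

lemma change_shift: "D c * D (Suc c) < 0 \<Longrightarrow> D (c + n) * D (Suc (c + n)) < 0"
proof -
  assume "D c * D (Suc c) < 0"
  moreover have "Suc (c + n) = Suc c + n" by simp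
  ultimately show ?thesis using D_anti[of c] D_anti[of "Suc c"] by simp
qed


lemma pedge_eq: "pedge (2 * n) u x = sph_arc (u (x mod (2 * n))) (u (Suc x mod (2 * n)))"
  unfolding pedge_def ..

lemma block_SI:
  assumes pos: "\<And>i. 0 < i \<Longrightarrow> i < n \<Longrightarrow> D (a + i) > 0"
  shows "self_intersections (2 * n) u \<noteq> {}"
proof -
  define p where "p i = u ((a + i) mod (2 * n))" for i
  have "chainX p n"
  proof (rule chain_lemma)
    show "2 \<le> n" using nge by simp
    show "p n = - p 0" unfolding p_def using umod[of a] by simp
    show "gpos p n" unfolding gpos_def p_def
    proof (intro allI impI)
      fix x y z assume h: "x < n" "y < n" "z < n" "x \<noteq> y" "y \<noteq> z" "x \<noteq> z"
      show "det3 (u ((a + x) mod (2 * n))) (u ((a + y) mod (2 * n))) (u ((a + z) mod (2 * n))) \<noteq> 0"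
        by (rule gen') (use modne2 h in auto)
    qed
    show "lturn p n" unfolding lturn_def
    proof (intro allI impI)
      fix i assume i: "0 < i" "i < n"
      have e1: "(a + i + 2 * n - 1) mod (2 * n) = (a + (i - 1)) mod (2 * n)"
      proof -
        have "a + i + 2 * n - 1 = (a + (i - 1)) + 2 * n" using i by simp
        then show ?thesis by simp
      qed
      have "D (a + i) = det3 (p (i - 1)) (p i) (p (Suc i))" unfolding D_def p_def e1 by simp
      then show "det3 (p (i - 1)) (p i) (p (Suc i)) > 0" using pos[OF i] by simp
    qed
  qed
  then obtain i j where ij: "i + 2 \<le> j" "j < n" "meet (p i) (p (Suc i)) (p j) (p (Suc j))"
    unfolding chainX_def by blast
  define e where "e = (a + i) mod (2 * n)"
  define f where "f = (a + j) mod (2 * n)"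
  have pe: "pedge (2 * n) u e = sph_arc (p i) (p (Suc i))"
    unfolding pedge_eq p_def e_def by (simp add: mod_Suc_eq)
  have pf: "pedge (2 * n) u f = sph_arc (p j) (p (Suc j))"
    unfolding pedge_eq p_def f_def by (simp add: mod_Suc_eq)
  have arcs: "pedge (2 * n) u e \<inter> pedge (2 * n) u f \<noteq> {}" unfolding pe pf by (rule meet_arc[OF ij(3)])
  define a' where "a' = a mod (2 * n)"
  have a': "a' < 2 * n" unfolding a'_def using nge by simp
  have E: "e = (if a' + i < 2 * n then a' + i else a' + i - 2 * n)"
  proof -
    have "e = (a' + i) mod (2 * n)" unfolding e_def a'_def by (simp add: mod_add_left_eq)
    then show ?thesis using mod2[of "a' + i" "2 * n"] a' ij by simp
  qed
  have F: "f = (if a' + j < 2 * n then a' + j else a' + j - 2 * n)"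
  proof -
    have "f = (a' + j) mod (2 * n)" unfolding f_def a'_def by (simp add: mod_add_left_eq)
    then show ?thesis using mod2[of "a' + j" "2 * n"] a' ij by simp
  qed
  define lo where "lo = min e f"
  define hi where "hi = max e f"
  have na: "lo < hi" "hi < 2 * n" "hi \<noteq> Suc lo" "\<not> (lo = 0 \<and> hi = 2 * n - 1)"
    unfolding lo_def hi_def using E F a' ij nge by (auto split: if_splits)
  have "pedge (2 * n) u lo \<inter> pedge (2 * n) u hi \<noteq> {}"
    using arcs unfolding lo_def hi_def by (cases "e \<le> f") (auto simp: min_def max_def Int_commute)
  then have "(lo, hi) \<in> self_intersections (2 * n) u"
    unfolding self_intersections_def using na by simp
  then show ?thesis by blast
qed

lemma indep_edge:
  assumes "x < 2 * n" "al *\<^sub>R u x + be *\<^sub>R u (Suc x mod (2 * n)) = 0"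
  shows "al = 0 \<and> be = 0"
proof -
  have d: "det3 (u (x mod (2 * n))) (u (Suc x mod (2 * n))) (u ((x + 2) mod (2 * n))) \<noteq> 0"
    by (rule gen') (use modne[of 1 n x] modne[of 2 n x] modne[of 1 n "Suc x"] nge in auto)
  have xm: "x mod (2 * n) = x" using assms by simp
  have "det3 (al *\<^sub>R u x + be *\<^sub>R u (Suc x mod (2 * n))) (u (Suc x mod (2 * n))) (u ((x + 2) mod (2 * n))) = 0"
    using assms(2) by (simp add: det3_expand)
  then have "al = 0" using d xm by (simp add: det3_lin)
  moreover have "det3 (u x) (al *\<^sub>R u x + be *\<^sub>R u (Suc x mod (2 * n))) (u ((x + 2) mod (2 * n))) = 0"
    using assms(2) by (simp add: det3_expand)
  then have "be = 0" using d xm by (simp add: det3_lin)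
  ultimately show ?thesis by simp
qed

lemma pedge_shift: "pedge (2 * n) u ((x + n) mod (2 * n)) = uminus ` pedge (2 * n) u x"
proof -
  have "Suc ((x + n) mod (2 * n)) mod (2 * n) = (Suc x + n) mod (2 * n)" by (simp add: mod_Suc_eq)
  then show ?thesis unfolding pedge_eq using umod[of x] umod[of "Suc x"]
    by (simp add: sph_arc_neg[symmetric])
qed

lemma SI_pair:
  assumes ij: "(i, j) \<in> self_intersections (2 * n) u"
  shows "\<exists>q \<in> self_intersections (2 * n) u. q \<noteq> (i, j)"
proof -
  have h: "i < j" "j < 2 * n" "j \<noteq> Suc i" "\<not> (i = 0 \<and> j = 2 * n - 1)"
    "pedge (2 * n) u i \<inter> pedge (2 * n) u j \<noteq> {}" using ij unfolding self_intersections_def by auto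
  define i' where "i' = (i + n) mod (2 * n)"
  define j' where "j' = (j + n) mod (2 * n)"
  have I': "i' = (if i + n < 2 * n then i + n else i + n - 2 * n)"
    unfolding i'_def using mod2[of "i + n" "2 * n"] h by simp
  have J': "j' = (if j + n < 2 * n then j + n else j + n - 2 * n)"
    unfolding j'_def using mod2[of "j + n" "2 * n"] h by simp
  have inter: "pedge (2 * n) u i' \<inter> pedge (2 * n) u j' \<noteq> {}"
  proof -
    obtain z where "z \<in> pedge (2 * n) u i" "z \<in> pedge (2 * n) u j" using h(5) by blast
    then have "- z \<in> pedge (2 * n) u i'" "- z \<in> pedge (2 * n) u j'"
      unfolding i'_def j'_def pedge_shift by auto
    then show ?thesis by blast
  qed
  define lo where "lo = min i' j'"
  define hi where "hi = max i' j'"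
  have na: "lo < hi" "hi < 2 * n" "hi \<noteq> Suc lo" "\<not> (lo = 0 \<and> hi = 2 * n - 1)"
    unfolding lo_def hi_def using I' J' h(1-4) nge by (auto split: if_splits)
  have mem: "(lo, hi) \<in> self_intersections (2 * n) u"
  proof -
    have "pedge (2 * n) u lo \<inter> pedge (2 * n) u hi \<noteq> {}"
      using inter unfolding lo_def hi_def by (cases "i' \<le> j'") (auto simp: min_def max_def Int_commute)
    then show ?thesis unfolding self_intersections_def using na by simp
  qed
  have ne: "(lo, hi) \<noteq> (i, j)"
  proof
    assume eq: "(lo, hi) = (i, j)"
    have "i' \<noteq> i" using I' h nge by auto
    then have ji: "j = i'" using eq unfolding lo_def hi_def by (auto simp: min_def max_def split: if_splits)
    have "pedge (2 * n) u j = uminus ` pedge (2 * n) u i" unfolding ji i'_def by (rule pedge_shift)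
    moreover have "pedge (2 * n) u i \<inter> uminus ` pedge (2 * n) u i = {}"
    proof -
      have im: "i mod (2 * n) = i" using h by simp
      have i2: "i < 2 * n" using h by simp
      show ?thesis unfolding pedge_eq im
        by (rule arc_antipodal_disjoint[OF indep_edge[OF i2]])
    qed
    ultimately show False using h(5) by simp
  qed
  show ?thesis using mem ne by blast
qed


lemma exists_change: "\<exists>a. D a < 0 \<and> D (Suc a) > 0"
proof (cases "D 0 < 0")
  case True
  have "D (0 + n) > 0" using D_anti[of 0] True by simp
  then obtain z where "D z < 0" "D (Suc z) > 0" using ivt_nat[of D 0 "0 + n"] True D_nz by auto
  then show ?thesis by blast
next
  case False
  then have p0: "D 0 > 0" using D_nz[of 0] by linarith
  have dn: "D (0 + n) < 0" using D_anti[of 0] p0 by simp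
  have d2n: "D (n + n) > 0" using D_anti[of n] dn by simp
  obtain z where "D z < 0" "D (Suc z) > 0" using ivt_nat[of D n "n + n"] dn d2n D_nz by auto
  then show ?thesis by blast
qed

lemma fin_I: "finite (inflections (2 * n) u)"
  by (rule finite_subset[of _ "{..<2 * n}"]) (auto simp: inflections_def)

lemma fin_SI: "finite (self_intersections (2 * n) u)"
  by (rule finite_subset[of _ "{..<2 * n} \<times> {..<2 * n}"]) (auto simp: self_intersections_def)

lemma card_infl2: "card (inflections (2 * n) u) \<ge> 2"
proof -
  obtain a where a: "D a < 0" "D (Suc a) > 0" using exists_change by blast
  have c: "D a * D (Suc a) < 0" using a by (simp add: mult_neg_pos)
  have m1: "a mod (2 * n) \<in> inflections (2 * n) u" by (rule infl_mem[OF c])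
  have m2: "(a + n) mod (2 * n) \<in> inflections (2 * n) u" by (rule infl_mem[OF change_shift[OF c]])
  have ne: "a mod (2 * n) \<noteq> (a + n) mod (2 * n)"
  proof
    assume "a mod (2 * n) = (a + n) mod (2 * n)"
    then have "a = a + n" using mod_inj_window[of a a "2 * n" "a + n"] nge by simp
    then show False using nge by simp
  qed
  have "card {a mod (2 * n), (a + n) mod (2 * n)} \<le> card (inflections (2 * n) u)"
    by (rule card_mono[OF fin_I]) (use m1 m2 in auto)
  then show ?thesis using ne by simp
qed

lemma noSI_six:
  assumes noSI: "self_intersections (2 * n) u = {}"
  shows "card (inflections (2 * n) u) \<ge> 6"
proof -
  obtain a0 where a0: "D a0 < 0" "D (Suc a0) > 0" using exists_change by blast
  have "\<not> (\<forall>i. 0 < i \<longrightarrow> i < n \<longrightarrow> D (a0 + i) > 0)" using block_SI[of a0] noSI by blast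
  then obtain i where i: "0 < i" "i < n" "\<not> D (a0 + i) > 0" by blast
  have ineg: "D (a0 + i) < 0" using i(3) D_nz[of "a0 + i"] by linarith
  have i2: "i \<noteq> 1" using ineg a0 by auto
  obtain z1 where z1: "a0 + 1 \<le> z1" "z1 < a0 + i" "D z1 > 0" "D (Suc z1) < 0"
    using ivt_nat'[of D "a0 + 1" "a0 + i"] a0 ineg i i2 D_nz by auto
  have an: "D (a0 + n) > 0" using D_anti[of a0] a0 by simp
  obtain z2 where z2: "a0 + i \<le> z2" "z2 < a0 + n" "D z2 < 0" "D (Suc z2) > 0"
    using ivt_nat[of D "a0 + i" "a0 + n"] an ineg i D_nz by auto
  have c0: "D a0 * D (Suc a0) < 0" using a0 by (simp add: mult_neg_pos)
  have c1: "D z1 * D (Suc z1) < 0" using z1 by (simp add: mult_pos_neg)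
  have c2: "D z2 * D (Suc z2) < 0" using z2 by (simp add: mult_neg_pos)
  define S where "S = {a0, z1, z2, a0 + n, z1 + n, z2 + n}"
  have chS: "\<And>c. c \<in> S \<Longrightarrow> D c * D (Suc c) < 0"
    unfolding S_def using c0 c1 c2 change_shift[OF c0] change_shift[OF c1] change_shift[OF c2] by auto
  have sub: "(\<lambda>v. v mod (2 * n)) ` S \<subseteq> inflections (2 * n) u" using chS infl_mem by auto
  have win: "\<And>v. v \<in> S \<Longrightarrow> a0 \<le> v \<and> v < a0 + 2 * n" unfolding S_def using z1 z2 i by auto
  have inj: "inj_on (\<lambda>v. v mod (2 * n)) S"
    unfolding inj_on_def using win mod_inj_window[of a0 _ "2 * n"] by blast
  have cS: "card S = 6" unfolding S_def using z1 z2 i by auto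
  have "card ((\<lambda>v. v mod (2 * n)) ` S) \<le> card (inflections (2 * n) u)" by (rule card_mono[OF fin_I sub])
  then show ?thesis using card_image[OF inj] cS by simp
qed

end


theorem theorem14:
  fixes n :: nat and u :: "nat \<Rightarrow> real^3"
  assumes n3: "2 * n \<ge> 6"
    and sphere: "\<forall>i < 2 * n. norm (u i) = 1"
    and symmetric: "\<forall>i < 2 * n. u ((i + n) mod (2 * n)) = - u i"
    and general: "\<forall>i < 2 * n. \<forall>j < 2 * n. \<forall>k < 2 * n.
                    i mod n \<noteq> j mod n \<and> j mod n \<noteq> k mod n \<and> i mod n \<noteq> k mod n
                    \<longrightarrow> det3 (u i) (u j) (u k) \<noteq> 0"
  shows "2 * card (self_intersections (2 * n) u) + card (inflections (2 * n) u) \<ge> 6"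
proof -
  interpret spoly n u by (rule spoly.intro[OF n3 symmetric general])
  show ?thesis
  proof (cases "self_intersections (2 * n) u = {}")
    case True then show ?thesis using noSI_six by simp
  next
    case False
    then obtain i j where ij: "(i, j) \<in> self_intersections (2 * n) u" by auto
    then obtain q where q: "q \<in> self_intersections (2 * n) u" "q \<noteq> (i, j)" using SI_pair by blast
    have "card {(i, j), q} \<le> card (self_intersections (2 * n) u)"
      by (rule card_mono[OF fin_SI]) (use ij q in auto)
    then have "card (self_intersections (2 * n) u) \<ge> 2" using q by simp
    then show ?thesis using card_infl2 by linarith
  qed
qed

end
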